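(* The transitivity degree of Thompson's group $F$ is at most $2$.
   Context: Thompson's group $F$ is the group of orientation-preserving homeomorphisms of $[0,1]$ that are piecewise linear with finitely many points of non-differentiability, all at dyadic rationals, and whose slopes are integer powers of $2$. The transitivity degree of a group is the supremum of all $k$ such that it admits a faithful action on a set that is transitive on ordered $k$-tuples of distinct elements. *)

theory Defs
  imports "HOL-Analysis.Analysis" "HOL-Algebra.Group_Action"
begin

definition dyadic :: "real \<Rightarrow> bool" where
  "dyadic x \<longleftrightarrow> (\<exists>(m::int) (n::nat). x = real_of_int m / 2 ^ n)"

text \<open>Elements of Thompson's group F, represented as functions on the reals that
  are the identity outside [0,1] (a canonical representative of a map of [0,1]).\<close>
definition thompsonF :: "(real \<Rightarrow> real) set" where
  "thompsonF = {f.
     homeomorphism {0..1} {0..1} f (inv_into {0..1} f)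
   \<and> mono_on {0..1} f
   \<and> (\<forall>x. x \<notin> {0..1} \<longrightarrow> f x = x)
   \<and> (\<exists>(a::nat \<Rightarrow> real) n. a 0 = 0 \<and> a n = 1
        \<and> (\<forall>i\<le>n. dyadic (a i))
        \<and> (\<forall>i<n. a i < a (Suc i))
        \<and> (\<forall>i<n. \<exists>(k::int) b. \<forall>x\<in>{a i..a (Suc i)}. f x = (2::real) powi k * x + b))}"

definition thompsonF_group :: "(real \<Rightarrow> real) monoid" where
  "thompsonF_group = \<lparr>carrier = thompsonF, mult = (\<circ>), one = id\<rparr>"

definition k_transitive :: "('a, 'm) monoid_scheme \<Rightarrow> 'b set \<Rightarrow> ('a \<Rightarrow> 'b \<Rightarrow> 'b) \<Rightarrow> nat \<Rightarrow> bool" where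
  "k_transitive G E \<phi> k \<longleftrightarrow>
     (\<forall>x y :: nat \<Rightarrow> 'b.
        inj_on x {..<k} \<and> x ` {..<k} \<subseteq> E \<and> inj_on y {..<k} \<and> y ` {..<k} \<subseteq> E
        \<longrightarrow> (\<exists>g\<in>carrier G. \<forall>i<k. \<phi> g (x i) = y i))"

end

theory Submission
  imports Defs
begin


definition bump :: "real \<Rightarrow> real \<Rightarrow> real \<Rightarrow> real" where
  "bump p d x = max (max (min x ((x+p)/2)) (x - d)) (min (2*x-p-4*d) x)"

lemma max_less_max: "(a::real) < a' \<Longrightarrow> b < b' \<Longrightarrow> max a b < max a' b'" by auto
lemma min_less_min: "(a::real) < a' \<Longrightarrow> b < b' \<Longrightarrow> min a b < min a' b'" by auto

lemma bump_strict: "d > 0 \<Longrightarrow> x < y \<Longrightarrow> bump p d x < bump p d y"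
  unfolding bump_def
  by (intro max_less_max min_less_min) auto

lemma bump_left: "d > 0 \<Longrightarrow> x \<le> p \<Longrightarrow> bump p d x = x"
  unfolding bump_def by (auto simp: max_def min_def)
lemma bump_right: "d > 0 \<Longrightarrow> x \<ge> p + 4*d \<Longrightarrow> bump p d x = x"
  unfolding bump_def by (auto simp: max_def min_def)
lemma bump_mid: "d > 0 \<Longrightarrow> bump p d (p + 2*d) = p + d"
  unfolding bump_def by (auto simp: max_def min_def)
lemma bump_p1: "d > 0 \<Longrightarrow> p \<le> x \<Longrightarrow> x \<le> p + 2*d \<Longrightarrow> bump p d x = 2 powi (-1) * x + p/2"
  unfolding bump_def by (auto simp: max_def min_def power_int_minus)
lemma bump_p2: "d > 0 \<Longrightarrow> p + 2*d \<le> x \<Longrightarrow> x \<le> p + 3*d \<Longrightarrow> bump p d x = 2 powi 0 * x + (-d)"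
  unfolding bump_def by (auto simp: max_def min_def)
lemma bump_p3: "d > 0 \<Longrightarrow> p + 3*d \<le> x \<Longrightarrow> x \<le> p + 4*d \<Longrightarrow> bump p d x = 2 powi 1 * x + (-p-4*d)"
  unfolding bump_def by (auto simp: max_def min_def)

lemma bump_cont: "continuous_on S (bump p d)"
  unfolding bump_def by (intro continuous_intros) auto

lemma dyadic_add: "dyadic x \<Longrightarrow> dyadic y \<Longrightarrow> dyadic (x + y)"
proof -
  assume "dyadic x" "dyadic y"
  then obtain m n m' n' where x: "x = real_of_int m / 2^n" and y: "y = real_of_int m' / 2^n'"
    unfolding dyadic_def by blast
  have "x + y = real_of_int (m * 2^n' + m' * 2^n) / 2^(n+n')"
    unfolding x y by (simp add: field_simps power_add)
  then show ?thesis unfolding dyadic_def by blast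
qed
lemma dyadic_0: "dyadic 0" unfolding dyadic_def by (rule exI[of _ 0], rule exI[of _ 0]) simp
lemma dyadic_1: "dyadic 1" unfolding dyadic_def by (rule exI[of _ 1], rule exI[of _ 0]) simp

lemma bump_in_F:
  assumes d: "d > 0" and p: "p > 0" and pd: "p + 4*d < 1" and dp: "dyadic p" and dd: "dyadic d"
  shows "bump p d \<in> thompsonF"
proof -
  let ?f = "bump p d"
  have f0: "?f 0 = 0" using bump_left[of d 0 p] d p by simp
  have f1: "?f 1 = 1" using bump_right[of d p 1] d pd by simp
  have inj: "inj_on ?f {0..1}"
    proof (rule inj_onI)
    fix x y assume "?f x = ?f y"
    then show "x = y" using bump_strict[OF d, of x y p] bump_strict[OF d, of y x p]
      by (cases x y rule: linorder_cases) auto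
  qed
  have mono: "mono_on {0..1} ?f"
    proof (rule mono_onI)
    fix x y :: real assume "x \<le> y"
    then show "?f x \<le> ?f y" using bump_strict[OF d, of x y p] by (cases "x = y") auto
  qed
  have img: "?f ` {0..1} = {0..1}"
  proof
    show "?f ` {0..1} \<subseteq> {0..1}"
    proof
      fix y assume "y \<in> ?f ` {0..1}"
      then obtain x where x: "x \<in> {0..1}" "y = ?f x" by auto
      have "?f 0 \<le> ?f x" "?f x \<le> ?f 1" using mono x by (auto intro: mono_onD)
      then show "y \<in> {0..1}" using f0 f1 x by auto
    qed
    show "{0..1} \<subseteq> ?f ` {0..1}"
    proof
      fix y :: real assume y: "y \<in> {0..1}"
      then obtain x where "0 \<le> x" "x \<le> 1" "?f x = y"
        using IVT'[of ?f 0 y 1] f0 f1 bump_cont by auto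
      then show "y \<in> ?f ` {0..1}" by force
    qed
  qed
  obtain g where g: "homeomorphism {0..1} {0..1} ?f g"
    using homeomorphism_compact[OF compact_Icc bump_cont img inj] by blast
  have hom: "homeomorphism {0..1} {0..1} ?f (inv_into {0..1} ?f)"
  proof (rule homeomorphism_cong[OF g])
    fix y :: real assume y: "y \<in> {0..1}"
    have "g y \<in> {0..1}" "?f (g y) = y" using g y unfolding homeomorphism_def by auto
    then show "inv_into {0..1} ?f y = g y" using inv_into_f_eq[OF inj] by blast
  qed auto
  have outside: "\<forall>x. x \<notin> {0..1} \<longrightarrow> ?f x = x"
    using bump_left[OF d] bump_right[OF d] p pd by (auto simp: not_le)
  define a where "a = (\<lambda>i. [0, p, p+2*d, p+3*d, p+4*d, 1::real] ! i)"
  have e2: "d + d = 2*d" and e3: "2*d + d = 3*d" and e4: "2*d+2*d = 4*d" by simp_all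
  have dd2: "dyadic (2*d)" using dyadic_add[OF dd dd] unfolding e2 .
  have dd3: "dyadic (3*d)" using dyadic_add[OF dd2 dd] unfolding e3 .
  have dd4: "dyadic (4*d)" using dyadic_add[OF dd2 dd2] unfolding e4 .
  have i5: "\<And>i. i \<le> 5 \<Longrightarrow> i = 0 \<or> i = 1 \<or> i = 2 \<or> i = 3 \<or> i = 4 \<or> i = (5::nat)" by auto
  have i4: "\<And>i. i < 5 \<Longrightarrow> i = 0 \<or> i = 1 \<or> i = 2 \<or> i = 3 \<or> i = (4::nat)" by auto
  have av: "a 0 = 0" "a 1 = p" "a 2 = p+2*d" "a 3 = p+3*d" "a 4 = p+4*d" "a 5 = 1"
    by (simp_all add: a_def numeral_eq_Suc)
  have A1: "a 0 = 0 \<and> a 5 = 1" using av by simp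
  have A2: "\<forall>i\<le>5. dyadic (a i)"
  proof (intro allI impI)
    fix i :: nat assume "i \<le> 5"
    then consider "i = 0" | "i = 1" | "i = 2" | "i = 3" | "i = 4" | "i = 5" using i5 by blast
    then show "dyadic (a i)"
      by cases (simp_all only: av dyadic_0 dyadic_1 dp dyadic_add[OF dp dd2] dyadic_add[OF dp dd3] dyadic_add[OF dp dd4])
  qed
  have lt: "a 0 < a 1" "a 1 < a 2" "a 2 < a 3" "a 3 < a 4" "a 4 < a 5" unfolding av using d p pd by simp_all
  have A3: "\<forall>i<5. a i < a (Suc i)"
  proof (intro allI impI)
    fix i :: nat assume "i < 5"
    then consider "i = 0" | "i = 1" | "i = 2" | "i = 3" | "i = 4" using i4 by blast
    then show "a i < a (Suc i)"
      by cases (use lt in \<open>simp_all add: eval_nat_numeral\<close>)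
  qed
  have A4: "\<forall>i<5. \<exists>(k::int) b. \<forall>x\<in>{a i..a (Suc i)}. ?f x = (2::real) powi k * x + b"
  proof (intro allI impI)
    fix i :: nat assume "i < 5"
    then consider "i = 0" | "i = 1" | "i = 2" | "i = 3" | "i = 4" using i4 by blast
    then show "\<exists>(k::int) b. \<forall>x\<in>{a i..a (Suc i)}. ?f x = (2::real) powi k * x + b"
    proof cases
      case 1
      have "\<forall>x\<in>{a 0..a 1}. ?f x = (2::real) powi 0 * x + 0" using bump_left[OF d] av by simp
      then have "\<exists>(k::int) b. \<forall>x\<in>{a 0..a 1}. ?f x = (2::real) powi k * x + b" by blast
      then show ?thesis using 1 by (simp add: eval_nat_numeral)
    next
      case 2
      have "\<forall>x\<in>{a 1..a 2}. ?f x = (2::real) powi (-1) * x + p/2" using bump_p1[OF d] av by auto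
      then have "\<exists>(k::int) b. \<forall>x\<in>{a 1..a 2}. ?f x = (2::real) powi k * x + b" by blast
      then show ?thesis using 2 by (simp add: eval_nat_numeral)
    next
      case 3
      have "\<forall>x\<in>{a 2..a 3}. ?f x = (2::real) powi 0 * x + (-d)" using bump_p2[OF d] av by auto
      then have "\<exists>(k::int) b. \<forall>x\<in>{a 2..a 3}. ?f x = (2::real) powi k * x + b" by blast
      then show ?thesis using 3 by (simp add: eval_nat_numeral)
    next
      case 4
      have "\<forall>x\<in>{a 3..a 4}. ?f x = (2::real) powi 1 * x + (-p-4*d)" using bump_p3[OF d] av by auto
      then have "\<exists>(k::int) b. \<forall>x\<in>{a 3..a 4}. ?f x = (2::real) powi k * x + b" by blast
      then show ?thesis using 4 by (simp add: eval_nat_numeral)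
    next
      case 5
      have "\<forall>x\<in>{a 4..a 5}. ?f x = (2::real) powi 0 * x + 0" using bump_right[OF d] av by simp
      then have "\<exists>(k::int) b. \<forall>x\<in>{a 4..a 5}. ?f x = (2::real) powi k * x + b" by blast
      then show ?thesis using 5 by (simp add: eval_nat_numeral)
    qed
  qed
  have "\<exists>(a::nat \<Rightarrow> real) n. a 0 = 0 \<and> a n = 1
        \<and> (\<forall>i\<le>n. dyadic (a i))
        \<and> (\<forall>i<n. a i < a (Suc i))
        \<and> (\<forall>i<n. \<exists>(k::int) b. \<forall>x\<in>{a i..a (Suc i)}. ?f x = (2::real) powi k * x + b)"
    apply (rule exI[of _ a], rule exI[of _ 5])
    using A1 A2 A3 A4 by simp
  then show ?thesis unfolding thompsonF_def
    using hom mono outside by simp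
qed



lemma (in group_action) grp: "group G"
  using group_hom group_hom.axioms(1) by blast

lemma (in group_action) inv_act:
  assumes "g \<in> carrier G" "x \<in> E"
  shows "\<phi> (inv g) (\<phi> g x) = x"
proof -
  interpret grp: group G by (rule grp)
  have "\<phi> (inv g) (\<phi> g x) = \<phi> (inv g \<otimes> g) x"
    using composition_rule[of x "inv g" g] assms by simp
  also have "\<dots> = \<phi> \<one> x" using assms by simp
  also have "\<dots> = x" using id_eq_one[symmetric] assms(2) by (metis restrict_apply')
  finally show ?thesis .
qed

lemma (in group_action) one_act: "x \<in> E \<Longrightarrow> \<phi> \<one> x = x"
  using id_eq_one[symmetric] by (metis restrict_apply')

lemma (in group_action) act_id_imp_one:
  assumes "g \<in> carrier G" "\<forall>x\<in>E. \<phi> g x = x"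
  shows "\<phi> g = \<phi> \<one>"
proof -
  have "\<phi> g \<in> extensional E" using bij_prop0[OF assms(1)] by (simp add: Bij_def)
  moreover have "\<phi> \<one> \<in> extensional E" unfolding id_eq_one[symmetric] by simp
  ultimately show ?thesis using assms(2) one_act by (intro extensionalityI) auto
qed

lemma (in group_action) sub_transitive:
  assumes S: "subgroup S G"
    and P: "\<forall>g\<in>carrier G. (\<forall>h\<in>S. g \<otimes> h \<otimes> inv g \<in> S) \<or> (\<forall>h\<in>S. inv g \<otimes> h \<otimes> g \<in> S)"
    and T3: "\<And>x y z. x \<in> E \<Longrightarrow> y \<in> E \<Longrightarrow> z \<in> E \<Longrightarrow> x \<noteq> y \<Longrightarrow> x \<noteq> z \<Longrightarrow> y \<noteq> z \<Longrightarrow>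
              \<exists>g\<in>carrier G. \<phi> g x = x \<and> \<phi> g y = z \<and> \<phi> g z = y"
    and h0: "h0 \<in> S" and x0: "x0 \<in> E" "\<phi> h0 x0 \<noteq> x0"
  shows "\<forall>u\<in>E. \<forall>v\<in>E. \<exists>h\<in>S. \<phi> h u = v"
proof -
  interpret grp: group G by (rule grp)
  have SG: "\<And>h. h \<in> S \<Longrightarrow> h \<in> carrier G" using S subgroup.subset by blast
  have reach: "\<exists>h\<in>S. \<phi> h x0 = z" if z: "z \<in> E" for z
  proof (rule ccontr)
    assume nz: "\<not> (\<exists>h\<in>S. \<phi> h x0 = z)"
    define y where "y = \<phi> h0 x0"
    have yE: "y \<in> E" using element_image[OF SG[OF h0] x0(1)] y_def by simp
    have "z \<noteq> x0" using nz one_act[OF x0(1)] subgroup.one_closed[OF S] by blast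
    moreover have "z \<noteq> y" using nz h0 y_def by blast
    moreover have "x0 \<noteq> y" using x0 y_def by simp
    ultimately obtain g where g: "g \<in> carrier G" "\<phi> g x0 = x0" "\<phi> g y = z" "\<phi> g z = y"
      using T3[OF x0(1) yE z] by metis
    have ig: "inv g \<in> carrier G" using g by simp
    have igx: "\<phi> (inv g) x0 = x0" using inv_act[OF g(1) x0(1)] g(2) by simp
    have igy: "\<phi> (inv g) y = z" using inv_act[OF g(1) z] g(4) by simp
    from P g(1) have "(\<forall>h\<in>S. g \<otimes> h \<otimes> inv g \<in> S) \<or> (\<forall>h\<in>S. inv g \<otimes> h \<otimes> g \<in> S)" by blast
    then show False
    proof
      assume A: "\<forall>h\<in>S. g \<otimes> h \<otimes> inv g \<in> S"
      have "\<phi> (g \<otimes> h0 \<otimes> inv g) x0 = \<phi> g (\<phi> h0 (\<phi> (inv g) x0))"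
        using composition_rule x0 g(1) ig SG[OF h0] by (simp add: igx)
      also have "\<dots> = z" using igx y_def g(3) by simp
      finally show False using A h0 nz by blast
    next
      assume A: "\<forall>h\<in>S. inv g \<otimes> h \<otimes> g \<in> S"
      have "\<phi> (inv g \<otimes> h0 \<otimes> g) x0 = \<phi> (inv g) (\<phi> h0 (\<phi> g x0))"
        using composition_rule x0 g(1) ig SG[OF h0] by (simp add: g(2))
      also have "\<dots> = z" using g(2) y_def igy by simp
      finally show False using A h0 nz by blast
    qed
  qed
  show ?thesis
  proof (intro ballI)
    fix u v assume u: "u \<in> E" and v: "v \<in> E"
    obtain h1 where h1: "h1 \<in> S" "\<phi> h1 x0 = u" using reach[OF u] by blast
    obtain h2 where h2: "h2 \<in> S" "\<phi> h2 x0 = v" using reach[OF v] by blast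
    have "h2 \<otimes> inv h1 \<in> S" using S h1 h2 by (simp add: subgroup.m_closed subgroup.m_inv_closed)
    moreover have "\<phi> (h2 \<otimes> inv h1) u = v"
    proof -
      have "\<phi> (h2 \<otimes> inv h1) u = \<phi> h2 (\<phi> (inv h1) u)"
        using composition_rule u SG h1 h2 by simp
      also have "\<phi> (inv h1) u = x0" using inv_act[OF SG[OF h1(1)] x0(1)] h1(2) by simp
      finally show ?thesis using h2 by simp
    qed
    ultimately show "\<exists>h\<in>S. \<phi> h u = v" by blast
  qed
qed



lemma F_img: "f \<in> thompsonF \<Longrightarrow> x \<in> {0..1} \<Longrightarrow> f x \<in> {0..1}"
  unfolding thompsonF_def homeomorphism_def by blast

lemma F_out: "f \<in> thompsonF \<Longrightarrow> x \<notin> {0..1} \<Longrightarrow> f x = x"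
  unfolding thompsonF_def by blast

lemma F_mono_on: "f \<in> thompsonF \<Longrightarrow> mono_on {0..1} f"
  unfolding thompsonF_def by blast

lemma F_mono:
  assumes f: "f \<in> thompsonF" and xy: "x \<le> (y::real)"
  shows "f x \<le> f y"
proof -
  have m: "mono_on {0..1} f" by (rule F_mono_on[OF f])
  show ?thesis
  proof (cases "x \<in> {0..1}")
    case True
    show ?thesis
    proof (cases "y \<in> {0..1}")
      case True
      then show ?thesis using \<open>x \<in> {0..1}\<close> xy m by (auto intro: mono_onD)
    next
      case False
      then have "y > 1" using True xy by auto
      then show ?thesis using F_img[OF f True] F_out[OF f False] by auto
    qed
  next
    case False
    show ?thesis
    proof (cases "x < 0")
      case True
      have "f x = x" using F_out[OF f False] .
      moreover have "x \<le> f y"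
      proof (cases "y \<in> {0..1}")
        case True then show ?thesis using F_img[OF f True] \<open>x < 0\<close> by auto
      next
        case False then show ?thesis using F_out[OF f False] xy by simp
      qed
      ultimately show ?thesis by simp
    next
      case False
      then have "x > 1" using \<open>x \<notin> {0..1}\<close> by auto
      then have "y \<notin> {0..1}" using xy by auto
      then show ?thesis using F_out[OF f \<open>x \<notin> {0..1}\<close>] F_out[OF f] xy by simp
    qed
  qed
qed

abbreviation "Gr \<equiv> thompsonF_group"

lemma Gr_simps: "carrier Gr = thompsonF" "mult Gr = (\<circ>)" "one Gr = id"
  by (simp_all add: thompsonF_group_def)

lemma Gr_inv:
  assumes "group Gr" "g \<in> thompsonF"
  shows "g ((inv\<^bsub>Gr\<^esub> g) x) = x" "(inv\<^bsub>Gr\<^esub> g) (g x) = x" "inv\<^bsub>Gr\<^esub> g \<in> thompsonF"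
proof -
  have "g \<otimes>\<^bsub>Gr\<^esub> inv\<^bsub>Gr\<^esub> g = \<one>\<^bsub>Gr\<^esub>" using group.r_inv[OF assms(1)] assms(2) Gr_simps by auto
  then show "g ((inv\<^bsub>Gr\<^esub> g) x) = x" by (simp add: Gr_simps fun_eq_iff)
  have "inv\<^bsub>Gr\<^esub> g \<otimes>\<^bsub>Gr\<^esub> g = \<one>\<^bsub>Gr\<^esub>" using group.l_inv[OF assms(1)] assms(2) Gr_simps by auto
  then show "(inv\<^bsub>Gr\<^esub> g) (g x) = x" by (simp add: Gr_simps fun_eq_iff)
  show "inv\<^bsub>Gr\<^esub> g \<in> thompsonF" using group.inv_closed[OF assms(1)] assms(2) Gr_simps by auto
qed

definition Sm :: "real \<Rightarrow> (real \<Rightarrow> real) set" where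
  "Sm c = {f \<in> thompsonF. \<forall>x\<ge>c. f x = x}"
definition Sp :: "real \<Rightarrow> (real \<Rightarrow> real) set" where
  "Sp c = {f \<in> thompsonF. \<forall>x\<le>c. f x = x}"

lemma id_F: "group Gr \<Longrightarrow> id \<in> thompsonF"
  using monoid.one_closed[OF group.is_monoid, of Gr] unfolding Gr_simps by simp

lemma comp_F: "group Gr \<Longrightarrow> f \<in> thompsonF \<Longrightarrow> g \<in> thompsonF \<Longrightarrow> f \<circ> g \<in> thompsonF"
  using monoid.m_closed[OF group.is_monoid, of Gr f g] unfolding Gr_simps by simp

lemma Sm_subgroup: assumes "group Gr" shows "subgroup (Sm c) Gr"
proof (rule group.subgroupI[OF assms])
  show "Sm c \<subseteq> carrier Gr" by (auto simp: Sm_def Gr_simps)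
  show "Sm c \<noteq> {}" using id_F[OF assms] by (auto simp: Sm_def)
  fix a assume a: "a \<in> Sm c"
  then have aF: "a \<in> thompsonF" and ax: "\<And>x. x \<ge> c \<Longrightarrow> a x = x" unfolding Sm_def by auto
  have "(inv\<^bsub>Gr\<^esub> a) x = x" if "x \<ge> c" for x
  proof -
    have "(inv\<^bsub>Gr\<^esub> a) x = (inv\<^bsub>Gr\<^esub> a) (a x)" using ax[OF that] by simp
    also have "\<dots> = x" by (rule Gr_inv(2)[OF assms aF])
    finally show ?thesis .
  qed
  then show "inv\<^bsub>Gr\<^esub> a \<in> Sm c" using Gr_inv(3)[OF assms aF] unfolding Sm_def by blast
  fix b assume b: "b \<in> Sm c"
  then have bF: "b \<in> thompsonF" and bx: "\<And>x. x \<ge> c \<Longrightarrow> b x = x" unfolding Sm_def by auto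
  have "a \<circ> b \<in> thompsonF" by (rule comp_F[OF assms aF bF])
  then show "a \<otimes>\<^bsub>Gr\<^esub> b \<in> Sm c" using ax bx unfolding Sm_def Gr_simps by simp
qed

lemma Sp_subgroup: assumes "group Gr" shows "subgroup (Sp c) Gr"
proof (rule group.subgroupI[OF assms])
  show "Sp c \<subseteq> carrier Gr" by (auto simp: Sp_def Gr_simps)
  show "Sp c \<noteq> {}" using id_F[OF assms] by (auto simp: Sp_def)
  fix a assume a: "a \<in> Sp c"
  then have aF: "a \<in> thompsonF" and ax: "\<And>x. x \<le> c \<Longrightarrow> a x = x" unfolding Sp_def by auto
  have "(inv\<^bsub>Gr\<^esub> a) x = x" if "x \<le> c" for x
  proof -
    have "(inv\<^bsub>Gr\<^esub> a) x = (inv\<^bsub>Gr\<^esub> a) (a x)" using ax[OF that] by simp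
    also have "\<dots> = x" by (rule Gr_inv(2)[OF assms aF])
    finally show ?thesis .
  qed
  then show "inv\<^bsub>Gr\<^esub> a \<in> Sp c" using Gr_inv(3)[OF assms aF] unfolding Sp_def by blast
  fix b assume b: "b \<in> Sp c"
  then have bF: "b \<in> thompsonF" and bx: "\<And>x. x \<le> c \<Longrightarrow> b x = x" unfolding Sp_def by auto
  have "a \<circ> b \<in> thompsonF" by (rule comp_F[OF assms aF bF])
  then show "a \<otimes>\<^bsub>Gr\<^esub> b \<in> Sp c" using ax bx unfolding Sp_def Gr_simps by simp
qed

lemma Sm_P:
  assumes grp: "group Gr"
  shows "\<forall>g\<in>carrier Gr. (\<forall>h\<in>Sm c. g \<otimes>\<^bsub>Gr\<^esub> h \<otimes>\<^bsub>Gr\<^esub> inv\<^bsub>Gr\<^esub> g \<in> Sm c)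
           \<or> (\<forall>h\<in>Sm c. inv\<^bsub>Gr\<^esub> g \<otimes>\<^bsub>Gr\<^esub> h \<otimes>\<^bsub>Gr\<^esub> g \<in> Sm c)"
proof
  fix g assume g: "g \<in> carrier Gr"
  then have gF: "g \<in> thompsonF" by (simp add: Gr_simps)
  note iv = Gr_inv[OF grp gF]
  show "(\<forall>h\<in>Sm c. g \<otimes>\<^bsub>Gr\<^esub> h \<otimes>\<^bsub>Gr\<^esub> inv\<^bsub>Gr\<^esub> g \<in> Sm c)
           \<or> (\<forall>h\<in>Sm c. inv\<^bsub>Gr\<^esub> g \<otimes>\<^bsub>Gr\<^esub> h \<otimes>\<^bsub>Gr\<^esub> g \<in> Sm c)"
  proof (cases "g c \<le> c")
    case True
    have "g \<otimes>\<^bsub>Gr\<^esub> h \<otimes>\<^bsub>Gr\<^esub> inv\<^bsub>Gr\<^esub> g \<in> Sm c" if h: "h \<in> Sm c" for h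
    proof -
      have hF: "h \<in> thompsonF" using h by (simp add: Sm_def)
      have "(g \<circ> h \<circ> inv\<^bsub>Gr\<^esub> g) x = x" if x: "x \<ge> c" for x
      proof -
        have "(inv\<^bsub>Gr\<^esub> g) x \<ge> c"
        proof (rule ccontr)
          assume "\<not> ?thesis"
          then have lt: "(inv\<^bsub>Gr\<^esub> g) x < c" by simp
          then have "g ((inv\<^bsub>Gr\<^esub> g) x) \<le> g c" using F_mono[OF gF] by simp
          then have "x \<le> g c" using iv(1) by simp
          then have "g ((inv\<^bsub>Gr\<^esub> g) x) = g c" using True x iv(1)[of x] by simp
          then have "(inv\<^bsub>Gr\<^esub> g) (g ((inv\<^bsub>Gr\<^esub> g) x)) = (inv\<^bsub>Gr\<^esub> g) (g c)" by simp
          then have "(inv\<^bsub>Gr\<^esub> g) x = c" by (simp only: iv(2))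
          then show False using lt by simp
        qed
        then show ?thesis using h iv(1) by (simp add: Sm_def)
      qed
      moreover have "g \<circ> h \<circ> inv\<^bsub>Gr\<^esub> g \<in> thompsonF" using comp_F[OF grp] gF hF iv(3) by simp
      ultimately show ?thesis by (simp add: Sm_def Gr_simps)
    qed
    then show ?thesis by blast
  next
    case False
    have "inv\<^bsub>Gr\<^esub> g \<otimes>\<^bsub>Gr\<^esub> h \<otimes>\<^bsub>Gr\<^esub> g \<in> Sm c" if h: "h \<in> Sm c" for h
    proof -
      have hF: "h \<in> thompsonF" using h by (simp add: Sm_def)
      have "(inv\<^bsub>Gr\<^esub> g \<circ> h \<circ> g) x = x" if x: "x \<ge> c" for x
      proof -
        have "g x \<ge> c" using F_mono[OF gF x] False by simp
        then show ?thesis using h iv(2) by (simp add: Sm_def)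
      qed
      moreover have "inv\<^bsub>Gr\<^esub> g \<circ> h \<circ> g \<in> thompsonF" using comp_F[OF grp] gF hF iv(3) by simp
      ultimately show ?thesis by (simp add: Sm_def Gr_simps)
    qed
    then show ?thesis by blast
  qed
qed

lemma Sp_P:
  assumes grp: "group Gr"
  shows "\<forall>g\<in>carrier Gr. (\<forall>h\<in>Sp c. g \<otimes>\<^bsub>Gr\<^esub> h \<otimes>\<^bsub>Gr\<^esub> inv\<^bsub>Gr\<^esub> g \<in> Sp c)
           \<or> (\<forall>h\<in>Sp c. inv\<^bsub>Gr\<^esub> g \<otimes>\<^bsub>Gr\<^esub> h \<otimes>\<^bsub>Gr\<^esub> g \<in> Sp c)"
proof
  fix g assume g: "g \<in> carrier Gr"
  then have gF: "g \<in> thompsonF" by (simp add: Gr_simps)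
  note iv = Gr_inv[OF grp gF]
  show "(\<forall>h\<in>Sp c. g \<otimes>\<^bsub>Gr\<^esub> h \<otimes>\<^bsub>Gr\<^esub> inv\<^bsub>Gr\<^esub> g \<in> Sp c)
           \<or> (\<forall>h\<in>Sp c. inv\<^bsub>Gr\<^esub> g \<otimes>\<^bsub>Gr\<^esub> h \<otimes>\<^bsub>Gr\<^esub> g \<in> Sp c)"
  proof (cases "g c \<ge> c")
    case True
    have "g \<otimes>\<^bsub>Gr\<^esub> h \<otimes>\<^bsub>Gr\<^esub> inv\<^bsub>Gr\<^esub> g \<in> Sp c" if h: "h \<in> Sp c" for h
    proof -
      have hF: "h \<in> thompsonF" using h by (simp add: Sp_def)
      have "(g \<circ> h \<circ> inv\<^bsub>Gr\<^esub> g) x = x" if x: "x \<le> c" for x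
      proof -
        have "(inv\<^bsub>Gr\<^esub> g) x \<le> c"
        proof (rule ccontr)
          assume "\<not> ?thesis"
          then have lt: "(inv\<^bsub>Gr\<^esub> g) x > c" by simp
          then have "g c \<le> g ((inv\<^bsub>Gr\<^esub> g) x)" using F_mono[OF gF] by simp
          then have "g c \<le> x" using iv(1) by simp
          then have "g ((inv\<^bsub>Gr\<^esub> g) x) = g c" using True x iv(1)[of x] by simp
          then have "(inv\<^bsub>Gr\<^esub> g) (g ((inv\<^bsub>Gr\<^esub> g) x)) = (inv\<^bsub>Gr\<^esub> g) (g c)" by simp
          then have "(inv\<^bsub>Gr\<^esub> g) x = c" by (simp only: iv(2))
          then show False using lt by simp
        qed
        then show ?thesis using h iv(1) by (simp add: Sp_def)
      qed
      moreover have "g \<circ> h \<circ> inv\<^bsub>Gr\<^esub> g \<in> thompsonF" using comp_F[OF grp] gF hF iv(3) by simp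
      ultimately show ?thesis by (simp add: Sp_def Gr_simps)
    qed
    then show ?thesis by blast
  next
    case False
    have "inv\<^bsub>Gr\<^esub> g \<otimes>\<^bsub>Gr\<^esub> h \<otimes>\<^bsub>Gr\<^esub> g \<in> Sp c" if h: "h \<in> Sp c" for h
    proof -
      have hF: "h \<in> thompsonF" using h by (simp add: Sp_def)
      have "(inv\<^bsub>Gr\<^esub> g \<circ> h \<circ> g) x = x" if x: "x \<le> c" for x
      proof -
        have "g x \<le> c" using F_mono[OF gF x] False by simp
        then show ?thesis using h iv(2) by (simp add: Sp_def)
      qed
      moreover have "inv\<^bsub>Gr\<^esub> g \<circ> h \<circ> g \<in> thompsonF" using comp_F[OF grp] gF hF iv(3) by simp
      ultimately show ?thesis by (simp add: Sp_def Gr_simps)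
    qed
    then show ?thesis by blast
  qed
qed

lemma Sm_Sp_commute:
  assumes l: "l \<in> Sm c" and m: "m \<in> Sp c"
  shows "l \<circ> m = m \<circ> l"
proof
  fix x
  have lF: "l \<in> thompsonF" and mF: "m \<in> thompsonF" using l m by (auto simp: Sm_def Sp_def)
  have lc: "l c = c" and mc: "m c = c" using l m by (auto simp: Sm_def Sp_def)
  show "(l \<circ> m) x = (m \<circ> l) x"
  proof (cases "x \<le> c")
    case True
    have "l x \<le> c" using F_mono[OF lF True] lc by simp
    then show ?thesis using True m by (simp add: Sp_def)
  next
    case False
    have "m x \<ge> c" using F_mono[OF mF, of c x] False mc by simp
    then show ?thesis using False l by (simp add: Sm_def)
  qed
qed



lemma (in faithful_action) moves:
  assumes "g \<in> carrier G" "g \<noteq> \<one>"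
  shows "\<exists>x\<in>E. \<phi> g x \<noteq> x"
proof (rule ccontr)
  assume "\<not> ?thesis"
  then have "\<phi> g = \<phi> \<one>" using act_id_imp_one[OF assms(1)] by blast
  moreover have "\<one> \<in> carrier G" using group.is_monoid[OF grp] monoid.one_closed by blast
  ultimately have "g = \<one>" using faithful assms(1) by (meson inj_onD)
  then show False using assms(2) by simp
qed

lemma (in group_action) infinite_E:
  assumes "inj_on \<phi> (carrier G)" "infinite (carrier G)"
  shows "infinite E"
proof
  assume fE: "finite E"
  have "\<phi> ` carrier G \<subseteq> E \<rightarrow>\<^sub>E E"
  proof
    fix f assume "f \<in> \<phi> ` carrier G"
    then obtain g where g: "g \<in> carrier G" "f = \<phi> g" by blast
    have "\<phi> g \<in> extensional E" "\<phi> g \<in> E \<rightarrow> E" using bij_prop0[OF g(1)] by (auto simp: Bij_def bij_betw_def)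
    then show "f \<in> E \<rightarrow>\<^sub>E E" using g(2) by (simp add: PiE_def)
  qed
  moreover have "finite (E \<rightarrow>\<^sub>E E)" using fE by (intro finite_PiE) auto
  ultimately have "finite (\<phi> ` carrier G)" by (rule finite_subset)
  then have "finite (carrier G)" using assms(1) by (rule finite_imageD)
  then show False using assms(2) by simp
qed

lemma three_from_k:
  assumes kt: "k_transitive G E \<phi> k" and k3: "3 \<le> k" and inf: "infinite E"
    and xyz: "x \<in> E" "y \<in> E" "z \<in> E" "x \<noteq> y" "x \<noteq> z" "y \<noteq> z"
  shows "\<exists>g\<in>carrier G. \<phi> g x = x \<and> \<phi> g y = z \<and> \<phi> g z = y"
proof -
  have "infinite (E - {x,y,z})" using inf by simp
  then obtain e :: "nat \<Rightarrow> _" where e: "inj e" "range e \<subseteq> E - {x,y,z}"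
    using infinite_countable_subset by blast
  have ex: "\<And>i. e i \<noteq> x" "\<And>i. e i \<noteq> y" "\<And>i. e i \<noteq> z" "\<And>i. e i \<in> E" using e(2) by auto
  define X where "X i = (if i = 0 then x else if i = 1 then y else if i = 2 then z else e i)" for i :: nat
  define Y where "Y i = (if i = 0 then x else if i = 1 then z else if i = 2 then y else e i)" for i :: nat
  have "inj X"
    unfolding inj_def X_def using ex xyz e(1) by (auto simp: inj_def split: if_splits)
  moreover have "inj Y"
    unfolding inj_def Y_def using ex xyz e(1) by (auto simp: inj_def split: if_splits)
  moreover have "X ` {..<k} \<subseteq> E" "Y ` {..<k} \<subseteq> E" using ex xyz by (auto simp: X_def Y_def)
  ultimately have XY: "inj X" "inj Y" "X ` {..<k} \<subseteq> E" "Y ` {..<k} \<subseteq> E" by auto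
  obtain g where g: "g \<in> carrier G" "\<forall>i<k. \<phi> g (X i) = Y i"
  proof -
    have "inj_on X {..<k}" "inj_on Y {..<k}" using \<open>inj X\<close> \<open>inj Y\<close> inj_on_subset by blast+
    then show ?thesis using that kt \<open>X ` {..<k} \<subseteq> E\<close> \<open>Y ` {..<k} \<subseteq> E\<close> unfolding k_transitive_def by blast
  qed
  have "\<phi> g (X 0) = Y 0" "\<phi> g (X 1) = Y 1" "\<phi> g (X 2) = Y 2" using g(2) k3 by auto
  then show ?thesis using g(1) by (auto simp: X_def Y_def)
qed



lemma dyadic_frac: "dyadic (real_of_int m / 2^n)" unfolding dyadic_def by blast

lemma bump_in_Sm:
  assumes "d > 0" "p > 0" "p + 4*d \<le> c" "c < 1" "dyadic p" "dyadic d"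
  shows "bump p d \<in> Sm c"
  using bump_in_F[of d p] bump_right[of d p] assms unfolding Sm_def by auto

lemma bump_in_Sp:
  assumes "d > 0" "p > 0" "c \<le> p" "p + 4*d < 1" "dyadic p" "dyadic d"
  shows "bump p d \<in> Sp c"
  using bump_in_F[of d p] bump_left[of d _ p] assms unfolding Sp_def by auto

lemma infinite_F: "infinite thompsonF"
proof -
  define f where "f n = bump (1/4) (1/2^(n+4))" for n :: nat
  have d1: "dyadic (1/4)" using dyadic_frac[of 1 2] by simp
  have d2: "dyadic (1/2^(n+4))" for n using dyadic_frac[of 1 "n+4"] by simp
  have small: "(1::real)/2^(n+4) \<le> 1/16" for n
  proof -
    have "(2::real)^4 \<le> 2^(n+4)" by (rule power_increasing) auto
    then show ?thesis by (simp add: field_simps)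
  qed
  have fF: "f n \<in> thompsonF" for n
  proof -
    have "1/4 + 4 * (1/2^(n+4)) < (1::real)" using small[of n] by linarith
    then show ?thesis unfolding f_def by (intro bump_in_F d1 d2) simp_all
  qed
  have key: "f m \<noteq> f n" if mn: "m < n" for m n
  proof
    assume eq: "f m = f n"
    define dm where "dm = (1::real)/2^(m+4)"
    define dn where "dn = (1::real)/2^(n+4)"
    have pos: "dm > 0" "dn > 0" by (simp_all add: dm_def dn_def)
    have "(1/2::real)^(n+3) \<le> (1/2)^(m+4)" by (rule power_decreasing) (use mn in auto)
    moreover have "2*dn = (1/2)^(n+3)" "dm = (1/2)^(m+4)" by (simp_all add: dn_def dm_def power_one_over power_add)
    ultimately have le: "2 * dn \<le> dm" by simp
    have a: "f m (1/4 + 2*dm) = 1/4 + dm" unfolding f_def dm_def by (rule bump_mid) simp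
    have b: "f n (1/4 + 2*dm) = 1/4 + 2*dm" unfolding f_def
      by (rule bump_right) (use le pos in \<open>auto simp: dn_def\<close>)
    from a b eq have "1/4 + dm = 1/4 + 2*dm" by simp
    then show False using pos by simp
  qed
  have "inj f"
  proof (rule injI)
    fix m n assume eq: "f m = f n"
    show "m = n"
    proof (rule ccontr)
      assume "m \<noteq> n"
      then consider "m < n" | "n < m" by linarith
      then show False
        by cases (use key[of m n] key[of n m] eq in auto)
    qed
  qed
  then have "infinite (range f)" by (rule range_inj_infinite)
  moreover have "range f \<subseteq> thompsonF" using fF by auto
  ultimately show ?thesis using infinite_super by blast
qed



theorem corollary5p3:
  fixes E :: "'b set" and \<phi> :: "(real \<Rightarrow> real) \<Rightarrow> 'b \<Rightarrow> 'b" and k :: nat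
  assumes "faithful_action thompsonF_group E \<phi>"
    and "k_transitive thompsonF_group E \<phi> k"
  shows "k \<le> 2"
proof (rule ccontr)
  assume "\<not> k \<le> 2"
  then have k3: "3 \<le> k" by simp
  interpret fa: faithful_action thompsonF_group E \<phi> by (rule assms(1))
  have grp: "group Gr" by (rule fa.grp)
  have carr: "carrier Gr = thompsonF" by (simp add: Gr_simps)
  have infE: "infinite E"
    using fa.infinite_E fa.faithful infinite_F carr by simp
  have T3: "\<And>x y z. x \<in> E \<Longrightarrow> y \<in> E \<Longrightarrow> z \<in> E \<Longrightarrow> x \<noteq> y \<Longrightarrow> x \<noteq> z \<Longrightarrow> y \<noteq> z \<Longrightarrow>
              \<exists>g\<in>carrier Gr. \<phi> g x = x \<and> \<phi> g y = z \<and> \<phi> g z = y"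
    using three_from_k[OF assms(2) k3 infE] by blast
  have dy: "dyadic (real_of_int m / 2^n)" for m n by (rule dyadic_frac)
  have d18: "dyadic (1/8)" using dy[of 1 3] by simp
  have d116: "dyadic (1/16)" using dy[of 1 4] by simp
  have d132: "dyadic (1/32)" using dy[of 1 5] by simp
  have d1316: "dyadic (13/16)" using dy[of 13 4] by simp
  have d916: "dyadic (9/16)" using dy[of 9 4] by simp
  define h0 where "h0 = bump (1/8) (1/16)"
  have h0S: "h0 \<in> Sm (1/2)" unfolding h0_def by (rule bump_in_Sm) (use d18 d116 in simp_all)
  have h0ne: "h0 \<noteq> \<one>\<^bsub>Gr\<^esub>"
  proof
    assume "h0 = \<one>\<^bsub>Gr\<^esub>"
    then have "h0 (1/8 + 2*(1/16)) = 1/8 + 2*(1/16)" by (simp add: Gr_simps)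
    moreover have "h0 (1/8 + 2*(1/16)) = 1/8 + 1/16" unfolding h0_def by (rule bump_mid) simp
    ultimately show False by simp
  qed
  have h0c: "h0 \<in> carrier Gr" using h0S by (simp add: Sm_def Gr_simps)
  obtain x0 where x0: "x0 \<in> E" "\<phi> h0 x0 \<noteq> x0" using fa.moves[OF h0c h0ne] by blast
  have Ltr: "\<forall>u\<in>E. \<forall>v\<in>E. \<exists>h\<in>Sm (1/2). \<phi> h u = v"
    by (rule fa.sub_transitive[OF Sm_subgroup[OF grp] Sm_P[OF grp] T3 h0S x0]) auto
  define h1 where "h1 = bump (13/16) (1/32)"
  have h1S: "h1 \<in> Sp (3/4)" unfolding h1_def by (rule bump_in_Sp) (use d1316 d132 in simp_all)
  have h1ne: "h1 \<noteq> \<one>\<^bsub>Gr\<^esub>"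
  proof
    assume "h1 = \<one>\<^bsub>Gr\<^esub>"
    then have "h1 (13/16 + 2*(1/32)) = 13/16 + 2*(1/32)" by (simp add: Gr_simps)
    moreover have "h1 (13/16 + 2*(1/32)) = 13/16 + 1/32" unfolding h1_def by (rule bump_mid) simp
    ultimately show False by simp
  qed
  have h1c: "h1 \<in> carrier Gr" using h1S by (simp add: Sp_def Gr_simps)
  obtain x1 where x1: "x1 \<in> E" "\<phi> h1 x1 \<noteq> x1" using fa.moves[OF h1c h1ne] by blast
  have Rtr: "\<forall>u\<in>E. \<forall>v\<in>E. \<exists>h\<in>Sp (3/4). \<phi> h u = v"
    by (rule fa.sub_transitive[OF Sp_subgroup[OF grp] Sp_P[OF grp] T3 h1S x1]) auto
  define kk where "kk = bump (9/16) (1/32)"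
  have kkS: "kk \<in> Sp (1/2)" unfolding kk_def by (rule bump_in_Sp) (use d916 d132 in simp_all)
  have kkc: "kk \<in> carrier Gr" using kkS by (simp add: Sp_def Gr_simps)
  have kkval: "kk (5/8) = 19/32"
  proof -
    have "kk (9/16 + 2*(1/32)) = 9/16 + 1/32" unfolding kk_def by (rule bump_mid) simp
    then show ?thesis by simp
  qed
  obtain e where e: "e \<in> E" using infE by (metis finite.emptyI ex_in_conv)
  have kke: "\<phi> kk e \<in> E" using fa.element_image[OF kkc e] by simp
  obtain k' where k': "k' \<in> Sp (3/4)" "\<phi> k' e = \<phi> kk e" using Rtr e kke by blast
  have k'c: "k' \<in> carrier Gr" using k' by (simp add: Sp_def Gr_simps)
  have k'S: "k' \<in> Sp (1/2)" using k' by (auto simp: Sp_def)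
  define m where "m = inv\<^bsub>Gr\<^esub> k' \<otimes>\<^bsub>Gr\<^esub> kk"
  have mS: "m \<in> Sp (1/2)" unfolding m_def using Sp_subgroup[OF grp] k'S kkS
    by (simp add: subgroup.m_closed subgroup.m_inv_closed)
  have mc: "m \<in> carrier Gr" using mS by (simp add: Sp_def Gr_simps)
  have ik'c: "inv\<^bsub>Gr\<^esub> k' \<in> carrier Gr" using group.inv_closed[OF grp k'c] .
  have me: "\<phi> m e = e"
  proof -
    have "\<phi> m e = \<phi> (inv\<^bsub>Gr\<^esub> k') (\<phi> kk e)" unfolding m_def
      using fa.composition_rule[OF e ik'c kkc] .
    also have "\<dots> = \<phi> (inv\<^bsub>Gr\<^esub> k') (\<phi> k' e)" using k'(2) by simp
    also have "\<dots> = e" by (rule fa.inv_act[OF k'c e])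
    finally show ?thesis .
  qed
  have mall: "\<forall>y\<in>E. \<phi> m y = y"
  proof
    fix y assume y: "y \<in> E"
    obtain l where l: "l \<in> Sm (1/2)" "\<phi> l e = y" using Ltr e y by blast
    have lc: "l \<in> carrier Gr" using l by (simp add: Sm_def Gr_simps)
    have comm: "m \<otimes>\<^bsub>Gr\<^esub> l = l \<otimes>\<^bsub>Gr\<^esub> m"
      using Sm_Sp_commute[OF l(1) mS] by (simp add: Gr_simps)
    have "\<phi> m y = \<phi> m (\<phi> l e)" using l by simp
    also have "\<dots> = \<phi> (m \<otimes>\<^bsub>Gr\<^esub> l) e" using fa.composition_rule[OF e mc lc] by simp
    also have "\<dots> = \<phi> (l \<otimes>\<^bsub>Gr\<^esub> m) e" using comm by simp
    also have "\<dots> = \<phi> l (\<phi> m e)" using fa.composition_rule[OF e lc mc] by simp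
    also have "\<dots> = y" using me l by simp
    finally show "\<phi> m y = y" .
  qed
  have "\<phi> m = \<phi> \<one>\<^bsub>Gr\<^esub>" by (rule fa.act_id_imp_one[OF mc mall])
  moreover have "\<one>\<^bsub>Gr\<^esub> \<in> carrier Gr" using monoid.one_closed[OF group.is_monoid[OF grp]] .
  ultimately have m1: "m = \<one>\<^bsub>Gr\<^esub>" using fa.faithful mc by (meson inj_onD)
  have k'F: "k' \<in> thompsonF" using k'c carr by simp
  have "kk x = k' x" for x
  proof -
    have "k' (m x) = k' ((inv\<^bsub>Gr\<^esub> k') (kk x))" unfolding m_def by (simp add: Gr_simps)
    also have "\<dots> = kk x" by (rule Gr_inv(1)[OF grp k'F])
    finally show ?thesis using m1 by (simp add: Gr_simps)
  qed
  then have "kk (5/8) = 5/8" using k' by (simp add: Sp_def)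
  then show False using kkval by simp
qed

end
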